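(* Let $n$ be a positive integer. For every rational number $x$ with $1/(n+1)<x<1/n$, we have $\mathcal{I}(1/(n+1))<\mathcal{I}(x)<\mathcal{I}(1/n)$.
   Context: For $x\in\mathbb{R}$ let $\{x\}=x-\lfloor x\rfloor$. The interrobang function $\mathcal{I}\colon[0,1]\cap\mathbb{Q}\to\mathbb{R}$ is defined recursively by $\mathcal{I}(0)=0$; $\mathcal{I}(x)=4^{-\lfloor1/x\rfloor}\big(1-2\,\mathcal{I}(\{1/x\})\big)$ if $0<x\le\tfrac12$; and $\mathcal{I}(x)=\tfrac38-\tfrac34\,\mathcal{I}(1/x-1)-\tfrac12\,\mathcal{I}(1-x)$ if $\tfrac12<x\le1$. The recursion is well founded: with the height $a/b\mapsto|a|+|b|$ ($\gcd(a,b)=1$), every argument on the right-hand side has strictly smaller height than $x$, so $\mathcal{I}$ is uniquely defined. *)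

theory Defs
  imports Complex_Main
begin

text \<open>Auxiliary function on numerator/denominator pairs: F a b represents the
  interrobang function at a/b, for 0 \<le> a \<le> b, b > 0 (values outside are junk).
  The recursion mirrors the three defining clauses; it is independent of the
  representative of the fraction.\<close>

function interro_aux :: "nat \<Rightarrow> nat \<Rightarrow> real" where
  "interro_aux a b =
     (if a = 0 \<or> b = 0 \<or> b < a then 0
      else if 2 * a \<le> b then
        (1/4) ^ (b div a) * (1 - 2 * interro_aux (b mod a) a)
      else 3/8 - 3/4 * interro_aux (b - a) a - 1/2 * interro_aux (b - a) b)"
  by pat_completeness auto
termination
  by (relation "measure (\<lambda>(a, b). a + b)") (auto intro: less_le_trans[OF mod_less_divisor])

definition interrobang :: "rat \<Rightarrow> real" where
  "interrobang x = (case quotient_of x of (p, q) \<Rightarrow> interro_aux (nat p) (nat q))"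

end

theory Submission
  imports Defs
begin

declare interro_aux.simps[simp del]

lemma F0[simp]: "interro_aux 0 b = 0"
  by (subst interro_aux.simps) simp

lemma F_bounds:
  "a \<le> b \<Longrightarrow> 0 < b \<Longrightarrow>
    0 \<le> interro_aux a b \<and> interro_aux a b \<le> 3/8
    \<and> (0 < a \<and> a < b \<longrightarrow> 0 < interro_aux a b \<and> interro_aux a b < 3/8)
    \<and> (0 < a \<and> 2*a \<le> b \<longrightarrow> interro_aux a b \<le> 1/16)"
proof (induction a b rule: interro_aux.induct)
  case (1 a b)
  show ?case
  proof (cases "a = 0")
    case True then show ?thesis by simp
  next
    case a0: False
    show ?thesis
    proof (cases "2*a \<le> b")
      case True
      define k where "k = b div a"
      have k2: "k \<ge> 2" unfolding k_def using True a0
        by (metis div_le_mono mult.commute nonzero_mult_div_cancel_left)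
      have IH: "0 \<le> interro_aux (b mod a) a \<and> interro_aux (b mod a) a \<le> 3/8"
        using "1.IH"(1) a0 True "1.prems" by (simp add: less_imp_le)
      have eq: "interro_aux a b = (1/4)^k * (1 - 2 * interro_aux (b mod a) a)"
        unfolding k_def using a0 True "1.prems" by (subst interro_aux.simps) simp
      have p0: "(1/4::real)^k \<le> (1/4)^2" using k2 by (rule power_decreasing) auto
      have p: "(1/4::real)^k \<le> 1/16" using p0 by (simp add: power2_eq_square)
      have q: "(0::real) < (1/4)^k" by simp
      have "interro_aux a b \<le> (1/4)^k" unfolding eq using IH q
        by (simp add: mult_le_cancel_left1)
      moreover have "interro_aux a b > 0" unfolding eq using IH q by simp
      ultimately show ?thesis using p by linarith
    next
      case False
      show ?thesis
      proof (cases "a = b")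
        case True
        have "interro_aux a b = 3/8" using a0 True by (subst interro_aux.simps) simp
        then show ?thesis using True by simp
      next
        case ab: False
        have IH1: "0 < interro_aux (b - a) a \<and> interro_aux (b - a) a < 3/8"
          using "1.IH"(2) a0 False ab "1.prems" by simp
        have IH2: "0 < interro_aux (b - a) b \<and> interro_aux (b - a) b \<le> 1/16"
          using "1.IH"(3) a0 False ab "1.prems" by simp
        have eq: "interro_aux a b = 3/8 - 3/4 * interro_aux (b - a) a - 1/2 * interro_aux (b - a) b"
          using a0 False "1.prems" by (subst interro_aux.simps) simp
        show ?thesis using IH1 IH2 False unfolding eq by simp
      qed
    qed
  qed
qed

lemma F_mid: "0 < a \<Longrightarrow> a < b \<Longrightarrow> \<not> 2*a \<le> b \<Longrightarrow> 1/16 < interro_aux a b \<and> interro_aux a b < 3/8"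
proof -
  assume a: "0 < a" "a < b" "\<not> 2*a \<le> b"
  have IH1: "0 < interro_aux (b - a) a \<and> interro_aux (b - a) a < 3/8"
    using F_bounds[of "b-a" a] a by simp
  have IH2: "0 < interro_aux (b - a) b \<and> interro_aux (b - a) b \<le> 1/16"
    using F_bounds[of "b-a" b] a by simp
  have eq: "interro_aux a b = 3/8 - 3/4 * interro_aux (b - a) a - 1/2 * interro_aux (b - a) b"
    using a by (subst interro_aux.simps) simp
  show ?thesis using IH1 IH2 unfolding eq by simp
qed

lemma inv_nat: "m > 0 \<Longrightarrow> interrobang (1 / rat_of_nat m) = interro_aux 1 m"
proof -
  assume m: "m > 0"
  have "1 / rat_of_nat m = Fract 1 (int m)"
    by (simp add: Fract_of_int_quotient)
  then have "quotient_of (1 / rat_of_nat m) = (1, int m)"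
    using m by (simp add: quotient_of_Fract normalize_def)
  then show ?thesis by (simp add: interrobang_def)
qed

lemma inv_val: "m \<ge> 2 \<Longrightarrow> interro_aux 1 m = (1/4)^m"
  by (subst interro_aux.simps) simp

lemma inv_one: "interro_aux 1 1 = 3/8"
  by (subst interro_aux.simps) simp

theorem mainTheorem8:
  fixes n :: nat and x :: rat
  assumes "n \<ge> 1"
    and "1 / rat_of_nat (n + 1) < x" and "x < 1 / rat_of_nat n"
  shows "interrobang (1 / rat_of_nat (n + 1)) < interrobang x
       \<and> interrobang x < interrobang (1 / rat_of_nat n)"
proof -
  obtain p q where pq: "quotient_of x = (p, q)" by force
  have q0: "q > 0" using quotient_of_denom_pos[OF pq] .
  have xe: "x = of_int p / of_int q" using quotient_of_div[OF pq] .
  have "1 / rat_of_nat (n + 1) < of_int p / of_int q" using assms(2) xe by simp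
  then have l: "of_int q < rat_of_nat (n+1) * of_int p" using q0
    by (simp add: field_simps)
  have "of_int p / of_int q < 1 / rat_of_nat n" using assms(3) xe by simp
  then have u: "rat_of_nat n * of_int p < of_int q" using q0 assms(1)
    by (simp add: field_simps)
  have l': "q < int (n+1) * p" using l by (metis of_int_less_iff of_int_mult of_int_of_nat_eq)
  have u': "int n * p < q" using u by (metis of_int_less_iff of_int_mult of_int_of_nat_eq)
  have p0: "p > 0" proof (rule ccontr)
    assume "\<not> p > 0"
    then have "int (n+1) * p \<le> 0" by (simp add: mult_nonneg_nonpos)
    then show False using l' q0 by simp
  qed
  define a where "a = nat p"
  define b where "b = nat q"
  have ix: "interrobang x = interro_aux a b" by (simp add: interrobang_def pq a_def b_def)
  have a0: "a > 0" using p0 a_def by simp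
  have ia: "int a = p" using p0 a_def by simp
  have ib: "int b = q" using q0 b_def by simp
  have "int b < int ((n+1)*a)" using l' ia ib by (simp add: algebra_simps)
  then have lb: "b < (n+1) * a" by (simp only: of_nat_less_iff)
  have "int (n*a) < int b" using u' ia ib by simp
  then have ub: "n * a < b" by (simp only: of_nat_less_iff)
  show ?thesis
  proof (cases "n = 1")
    case True
    have "1/16 < interro_aux a b \<and> interro_aux a b < 3/8"
      using F_mid[of a b] a0 lb ub True by simp
    then show ?thesis using True ix inv_nat[of 2] inv_nat[of 1] inv_val[of 2] inv_one
      by (simp add: power2_eq_square)
  next
    case False
    then have n2: "n \<ge> 2" using assms(1) by simp
    have na: "2 * a \<le> n * a" using n2 by (simp add: mult_le_mono1)
    have ba: "a < b" using ub na a0 by linarith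
    have two: "2 * a \<le> b" using ub na by linarith
    have dv: "b div a = n"
      by (rule div_nat_eqI) (use lb ub in \<open>simp_all add: mult.commute\<close>)
    have r0: "b mod a > 0"
    proof (rule ccontr)
      assume "\<not> b mod a > 0"
      then have "b = n * a" using div_mult_mod_eq[of b a] dv by simp
      then show False using ub by simp
    qed
    have rb: "0 < interro_aux (b mod a) a \<and> interro_aux (b mod a) a < 3/8"
      using F_bounds[of "b mod a" a] r0 a0 by simp
    have eq: "interro_aux a b = (1/4)^n * (1 - 2 * interro_aux (b mod a) a)"
      using a0 two ba dv by (subst interro_aux.simps) simp
    have q: "(0::real) < (1/4)^n" by simp
    have "interro_aux a b < (1/4)^n" unfolding eq using rb q
      by (simp add: mult_less_cancel_left1)
    moreover have "(1/4)^(n+1) < interro_aux a b" unfolding eq using rb q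
      by (simp add: mult_less_cancel_left)
    ultimately show ?thesis using ix inv_nat[of n] inv_nat[of "n+1"] inv_val[of n] inv_val[of "n+1"] n2
      by simp
  qed
qed

end
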